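(* Let $Z_i=(X_i,Y_i)$, $i=1,\dots,n+1$, be i.i.d. from a distribution on $\mathbb R^p\times\mathbb R$, let $V(\cdot)$ be a real-valued score function with $V_i=V(Z_i)$, and fix $\alpha\in(0,1)$. Consider the localizer $H(x_1,x_2)=\exp(-\|x_1-x_2\|/h)$ with $h>0$ such that $\mathbb P\big(\sum_{i=1}^{n+1}H(X_{n+1},X_i)<\frac{1}{1-\alpha}\big)\ge\varepsilon$ for some $\varepsilon\in(\alpha,1)$. Let $p^H_{n+1,j}=H(X_{n+1},X_j)/\sum_{k=1}^{n+1}H(X_{n+1},X_k)$ and $\hat{\mathcal F}=\sum_{j=1}^{n}p^H_{n+1,j}\delta_{V_j}+p^H_{n+1,n+1}\delta_{+\infty}$, and let $C(X_{n+1})=\{y: V(X_{n+1},y)\le Q(\alpha;\hat{\mathcal F})\}$. Then $$\mathbb P\big(Q(\alpha;\hat{\mathcal F})=\infty\big)\ge\varepsilon,\qquad \mathbb P\big(Y_{n+1}\in C(X_{n+1})\big)=\mathbb P\big(V_{n+1}\le Q(\alpha;\hat{\mathcal F})\big)\ge\varepsilon.$$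
   Context: For a distribution $\mathcal F$ on $\mathbb R\cup\{+\infty\}$, $Q(\alpha;\mathcal F)=\inf\{t:\mathbb P_{T\sim\mathcal F}(T\le t)\ge\alpha\}$; $\delta_v$ is the point mass at $v$; $\|\cdot\|$ is a norm on $\mathbb R^p$. *)

theory Defs
  imports "HOL-Probability.Probability"
begin

definition is_norm :: "(real ^ 'p \<Rightarrow> real) \<Rightarrow> bool" where
  "is_norm N \<longleftrightarrow> (\<forall>x. 0 \<le> N x) \<and> (\<forall>x. N x = 0 \<longleftrightarrow> x = 0)
     \<and> (\<forall>c x. N (c *\<^sub>R x) = \<bar>c\<bar> * N x) \<and> (\<forall>x y. N (x + y) \<le> N x + N y)"

text \<open>CDF of the finite discrete distribution sum of w * delta_v on the extended reals,
  given as a list of (weight, atom) pairs.\<close>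
definition disc_cdf :: "(real \<times> ereal) list \<Rightarrow> ereal \<Rightarrow> real" where
  "disc_cdf ms t = (\<Sum>(w, v) \<leftarrow> ms. if v \<le> t then w else 0)"

definition quantile :: "real \<Rightarrow> (ereal \<Rightarrow> real) \<Rightarrow> ereal" where
  "quantile \<alpha> F = Inf {t. F t \<ge> \<alpha>}"

definition localizer :: "(real ^ 'p \<Rightarrow> real) \<Rightarrow> real \<Rightarrow> real ^ 'p \<Rightarrow> real ^ 'p \<Rightarrow> real" where
  "localizer N h x1 x2 = exp (- N (x1 - x2) / h)"

definition pH :: "(real ^ 'p \<Rightarrow> real) \<Rightarrow> real \<Rightarrow> nat \<Rightarrow> (nat \<Rightarrow> real ^ 'p) \<Rightarrow> nat \<Rightarrow> real" where
  "pH N h n x j = localizer N h (x (n+1)) (x j) / (\<Sum>k=1..n+1. localizer N h (x (n+1)) (x k))"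

definition Fhat :: "(real ^ 'p \<Rightarrow> real) \<Rightarrow> real \<Rightarrow> nat \<Rightarrow> (nat \<Rightarrow> real ^ 'p) \<Rightarrow> (nat \<Rightarrow> real) \<Rightarrow> ereal \<Rightarrow> real" where
  "Fhat N h n x v = disc_cdf (map (\<lambda>j. (pH N h n x j, ereal (v j))) [1..<n+1] @ [(pH N h n x (n+1), \<infinity>)])"

end

theory Submission
  imports Defs
begin

lemma norm_sum_le:
  assumes "is_norm N" "finite A"
  shows "N (sum f A) \<le> (\<Sum>i\<in>A. N (f i))"
  using assms(2)
proof (induction A rule: finite_induct)
  case empty
  have "N 0 = 0" using assms(1) unfolding is_norm_def by blast
  then show ?case by simp
next
  case (insert a A)
  have "N (sum f (insert a A)) = N (f a + sum f A)" using insert by simp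
  also have "\<dots> \<le> N (f a) + N (sum f A)" using assms(1) by (simp add: is_norm_def)
  also have "\<dots> \<le> N (f a) + (\<Sum>i\<in>A. N (f i))" using insert by simp
  finally show ?case using insert by simp
qed

lemma norm_bound:
  fixes N :: "real ^ 'p \<Rightarrow> real"
  assumes "is_norm N"
  shows "N x \<le> (\<Sum>i\<in>UNIV. N (axis i 1)) * norm x"
proof -
  have "N x = N (\<Sum>i\<in>UNIV. (x$i) *\<^sub>R axis i (1::real))"
    using basis_expansion[of x] by (simp add: scalar_mult_eq_scaleR)
  also have "\<dots> \<le> (\<Sum>i\<in>UNIV. N ((x$i) *\<^sub>R axis i (1::real)))"
    by (rule norm_sum_le[OF assms]) simp
  also have "\<dots> = (\<Sum>i\<in>UNIV. \<bar>x$i\<bar> * N (axis i 1))"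
    using assms by (simp add: is_norm_def)
  also have "\<dots> \<le> (\<Sum>i\<in>UNIV. norm x * N (axis i 1))"
    apply (rule sum_mono) apply (rule mult_right_mono)
    using assms component_le_norm_cart by (auto simp: is_norm_def)
  finally show ?thesis by (simp add: sum_distrib_right mult.commute sum_distrib_left)
qed

lemma norm_cont:
  fixes N :: "real ^ 'p \<Rightarrow> real"
  assumes "is_norm N"
  shows "N \<in> borel_measurable borel"
proof -
  define B where "B = (\<Sum>i\<in>UNIV. N (axis i (1::real)))"
  have B0: "0 \<le> B" unfolding B_def using assms by (auto simp: is_norm_def intro: sum_nonneg)
  have sym: "N (y - x) = N (x - y)" for x y
  proof -
    have "N (y - x) = N ((-1) *\<^sub>R (x - y))" by simp
    also have "\<dots> = \<bar>-1\<bar> * N (x - y)" using assms unfolding is_norm_def by blast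
    finally show ?thesis by simp
  qed
  have "B-lipschitz_on UNIV N"
  proof (rule lipschitz_onI)
    fix x y :: "real ^ 'p"
    have t1: "N x \<le> N (x - y) + N y" using assms unfolding is_norm_def
      by (metis diff_add_cancel)
    have t2: "N y \<le> N (y - x) + N x" using assms unfolding is_norm_def
      by (metis diff_add_cancel)
    have "dist (N x) (N y) \<le> N (x - y)" using t1 t2 sym[of x y] by (simp add: dist_real_def)
    also have "\<dots> \<le> B * norm (x - y)" using norm_bound[OF assms] B_def by simp
    finally show "dist (N x) (N y) \<le> B * dist x y" by (simp add: dist_norm)
  qed (use B0 in auto)
  then have "continuous_on UNIV N" by (rule lipschitz_on_continuous_on)
  then show ?thesis by (rule borel_measurable_continuous_onI)
qed

lemma Q_lemmas:
  fixes p v :: "nat \<Rightarrow> real" and \<alpha> :: real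
  assumes p0: "\<forall>k. 0 \<le> p k" and p1: "(\<Sum>k=1..n+1. p k) = 1" and a1: "\<alpha> \<le> 1" and a0: "0 < \<alpha>"
  defines "F \<equiv> \<lambda>t. (\<Sum>k=1..n. if ereal (v k) \<le> t then p k else 0) + (if t = \<infinity> then p (n+1) else 0)"
  shows "quantile \<alpha> F = \<infinity> \<longleftrightarrow> (\<Sum>k=1..n. p k) < \<alpha>"
    and "ereal r \<le> quantile \<alpha> F \<longleftrightarrow> (\<forall>j\<in>{1..n}. v j < r \<longrightarrow> F (ereal (v j)) < \<alpha>)"
proof -
  let ?S = "{t. F t \<ge> \<alpha>}"
  have Finf: "F \<infinity> = 1" using p1 unfolding F_def by simp
  have Ffin: "F t \<le> (\<Sum>k=1..n. p k)" if "t \<noteq> \<infinity>" for t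
    unfolding F_def using that p0 by (auto intro!: sum_mono)
  show "quantile \<alpha> F = \<infinity> \<longleftrightarrow> (\<Sum>k=1..n. p k) < \<alpha>"
  proof
    assume Q: "quantile \<alpha> F = \<infinity>"
    show "(\<Sum>k=1..n. p k) < \<alpha>"
    proof (rule ccontr)
      assume "\<not> ?thesis"
      define t0 where "t0 = ereal (\<Sum>k=1..n. \<bar>v k\<bar>)"
      have "v k \<le> (\<Sum>k=1..n. \<bar>v k\<bar>)" if "k \<in> {1..n}" for k
        using member_le_sum[of k "{1..n}" "\<lambda>k. \<bar>v k\<bar>"] that by force
      then have "F t0 = (\<Sum>k=1..n. p k)" unfolding F_def t0_def by (auto intro!: sum.cong)
      then have "t0 \<in> ?S" using \<open>\<not> _\<close> by simp
      then have "quantile \<alpha> F \<le> t0" unfolding quantile_def by (rule Inf_lower)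
      then show False using Q t0_def by simp
    qed
  next
    assume s: "(\<Sum>k=1..n. p k) < \<alpha>"
    have "?S = {\<infinity>}"
    proof
      show "?S \<subseteq> {\<infinity>}" using Ffin s by (force)
      show "{\<infinity>} \<subseteq> ?S" using Finf a1 by simp
    qed
    then show "quantile \<alpha> F = \<infinity>" unfolding quantile_def by simp
  qed
  show "ereal r \<le> quantile \<alpha> F \<longleftrightarrow> (\<forall>j\<in>{1..n}. v j < r \<longrightarrow> F (ereal (v j)) < \<alpha>)"
  proof
    assume H: "ereal r \<le> quantile \<alpha> F"
    show "\<forall>j\<in>{1..n}. v j < r \<longrightarrow> F (ereal (v j)) < \<alpha>"
    proof (intro ballI impI)
      fix j assume j: "j \<in> {1..n}" "v j < r"
      show "F (ereal (v j)) < \<alpha>"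
      proof (rule ccontr)
        assume "\<not> ?thesis"
        then have "ereal (v j) \<in> ?S" by simp
        then have "quantile \<alpha> F \<le> ereal (v j)" unfolding quantile_def by (rule Inf_lower)
        with H have "ereal r \<le> ereal (v j)" by (rule order_trans)
        then show False using j(2) by simp
      qed
    qed
  next
    assume H: "\<forall>j\<in>{1..n}. v j < r \<longrightarrow> F (ereal (v j)) < \<alpha>"
    show "ereal r \<le> quantile \<alpha> F" unfolding quantile_def
    proof (rule Inf_greatest)
      fix t assume tS: "t \<in> ?S"
      show "ereal r \<le> t"
      proof (rule ccontr)
        assume "\<not> ?thesis"
        then have tr: "t < ereal r" by simp
        then have tinf: "t \<noteq> \<infinity>" by auto
        define J where "J = {k\<in>{1..n}. ereal (v k) \<le> t}"
        have Ft: "F t = (\<Sum>k\<in>J. p k)" unfolding F_def J_def using tinf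
          by (simp add: sum.If_cases Int_def conj_commute)
        have "J \<noteq> {}" using Ft tS a0 by auto
        have fJ: "finite J" unfolding J_def by simp
        have "Max (v ` J) \<in> v ` J" using fJ \<open>J \<noteq> {}\<close> by simp
        then obtain j where jJ: "j \<in> J" and jm: "v j = Max (v ` J)" by force
        have jmax: "\<forall>k\<in>J. v k \<le> v j" using jm fJ by simp
        have J2: "{k\<in>{1..n}. v k \<le> v j} = J"
        proof
          show "{k\<in>{1..n}. v k \<le> v j} \<subseteq> J" using jJ unfolding J_def
            by (auto intro: order_trans[of _ "ereal (v j)"])
          show "J \<subseteq> {k\<in>{1..n}. v k \<le> v j}" using jmax J_def by auto
        qed
        have Fj: "F (ereal (v j)) = (\<Sum>k\<in>J. p k)" unfolding F_def
          by (simp add: sum.If_cases J2[symmetric] Int_def conj_commute)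
        have "v j < r" using jJ tr unfolding J_def
          by (metis (mono_tags, lifting) le_less_trans less_ereal.simps(1) mem_Collect_eq)
        moreover have "j \<in> {1..n}" using jJ J_def by simp
        ultimately have "F (ereal (v j)) < \<alpha>" using H by blast
        then show False using Fj Ft tS by simp
      qed
    qed
  qed
qed

lemma pH_props:
  fixes N :: "real ^ 'p \<Rightarrow> real" and h :: real and n :: nat and x :: "nat \<Rightarrow> real ^ 'p"
  assumes "is_norm N"
  defines "L \<equiv> (\<Sum>k=1..n+1. localizer N h (x (n+1)) (x k))"
  shows "1 \<le> L" "\<And>k. 0 \<le> pH N h n x k" "(\<Sum>k=1..n+1. pH N h n x k) = 1"
    "pH N h n x (n+1) = 1 / L"
proof -
  have N0: "N 0 = 0" using assms(1) unfolding is_norm_def by blast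
  have lpos: "\<And>a b. 0 < localizer N h a b" unfolding localizer_def by simp
  have "L = (\<Sum>k=1..n. localizer N h (x (n+1)) (x k)) + localizer N h (x (n+1)) (x (n+1))"
    unfolding L_def by simp
  also have "localizer N h (x (n+1)) (x (n+1)) = 1" unfolding localizer_def using N0 by simp
  finally have "L = (\<Sum>k=1..n. localizer N h (x (n+1)) (x k)) + 1" .
  moreover have "0 \<le> (\<Sum>k=1..n. localizer N h (x (n+1)) (x k))"
    using lpos by (simp add: sum_nonneg less_imp_le)
  ultimately show L1: "1 \<le> L" by simp
  show "\<And>k. 0 \<le> pH N h n x k" unfolding pH_def using lpos L1 L_def[symmetric]
    by (simp add: less_imp_le)
  show "(\<Sum>k=1..n+1. pH N h n x k) = 1" unfolding pH_def using L1 L_def[symmetric]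
    by (simp add: sum_divide_distrib[symmetric])
  show "pH N h n x (n+1) = 1 / L" unfolding pH_def using N0 L_def[symmetric]
    by (simp add: localizer_def)
qed

lemma Fhat_eq:
  "Fhat N h n x v = (\<lambda>t. (\<Sum>k=1..n. if ereal (v k) \<le> t then pH N h n x k else 0)
      + (if t = \<infinity> then pH N h n x (n+1) else 0))"
proof
  fix t
  have "sum_list (map (\<lambda>k. if ereal (v k) \<le> t then pH N h n x k else 0) [1..<n+1])
     = (\<Sum>k=1..n. if ereal (v k) \<le> t then pH N h n x k else 0)"
  proof -
    have e: "set [1..<n+1] = {1..n}" by auto
    show ?thesis using sum_set_upt_conv_sum_list_nat[symmetric, of "\<lambda>k. if ereal (v k) \<le> t then pH N h n x k else 0" 1 "n+1"]
      unfolding e .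
  qed
  then show "Fhat N h n x v t = (\<Sum>k=1..n. if ereal (v k) \<le> t then pH N h n x k else 0)
      + (if t = \<infinity> then pH N h n x (n+1) else 0)"
    unfolding Fhat_def disc_cdf_def by (simp add: o_def)
qed

theorem proposition1:
  fixes M :: "'a measure"
    and X :: "nat \<Rightarrow> 'a \<Rightarrow> real ^ 'p" and Y :: "nat \<Rightarrow> 'a \<Rightarrow> real"
    and V :: "(real ^ 'p) \<times> real \<Rightarrow> real"
    and N :: "real ^ 'p \<Rightarrow> real"
    and n :: nat and \<alpha> h \<epsilon> :: real
  assumes "prob_space M"
    and "is_norm N"
    and "prob_space.indep_vars M (\<lambda>_. borel) (\<lambda>i \<omega>. (X i \<omega>, Y i \<omega>)) {1..n+1}"
    and "\<forall>i\<in>{1..n+1}. distr M borel (\<lambda>\<omega>. (X i \<omega>, Y i \<omega>)) = distr M borel (\<lambda>\<omega>. (X 1 \<omega>, Y 1 \<omega>))"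
    and "V \<in> borel_measurable borel"
    and "0 < \<alpha>" "\<alpha> < 1" "0 < h"
    and "\<alpha> < \<epsilon>" "\<epsilon> < 1"
    and "measure M {\<omega> \<in> space M. (\<Sum>i=1..n+1. localizer N h (X (n+1) \<omega>) (X i \<omega>)) < 1 / (1 - \<alpha>)} \<ge> \<epsilon>"
  shows "measure M {\<omega> \<in> space M.
            quantile \<alpha> (Fhat N h n (\<lambda>j. X j \<omega>) (\<lambda>j. V (X j \<omega>, Y j \<omega>))) = \<infinity>} \<ge> \<epsilon>
     \<and> measure M {\<omega> \<in> space M. Y (n+1) \<omega> \<in>
            {y. ereal (V (X (n+1) \<omega>, y)) \<le> quantile \<alpha> (Fhat N h n (\<lambda>j. X j \<omega>) (\<lambda>j. V (X j \<omega>, Y j \<omega>)))}}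
       = measure M {\<omega> \<in> space M.
            ereal (V (X (n+1) \<omega>, Y (n+1) \<omega>)) \<le> quantile \<alpha> (Fhat N h n (\<lambda>j. X j \<omega>) (\<lambda>j. V (X j \<omega>, Y j \<omega>)))}
     \<and> measure M {\<omega> \<in> space M.
            ereal (V (X (n+1) \<omega>, Y (n+1) \<omega>)) \<le> quantile \<alpha> (Fhat N h n (\<lambda>j. X j \<omega>) (\<lambda>j. V (X j \<omega>, Y j \<omega>)))} \<ge> \<epsilon>"
proof -
  interpret P: prob_space M by (rule assms(1))
  define Q where "Q \<omega> = quantile \<alpha> (Fhat N h n (\<lambda>j. X j \<omega>) (\<lambda>j. V (X j \<omega>, Y j \<omega>)))" for \<omega>
  define L where "L \<omega> = (\<Sum>i=1..n+1. localizer N h (X (n+1) \<omega>) (X i \<omega>))" for \<omega>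
  define v where "v j \<omega> = V (X j \<omega>, Y j \<omega>)" for j \<omega>
  define p where "p \<omega> k = pH N h n (\<lambda>j. X j \<omega>) k" for \<omega> k
  define G where "G j \<omega> = (\<Sum>k=1..n. if v k \<omega> \<le> v j \<omega> then p \<omega> k else 0)" for j \<omega>
  have props: "1 \<le> L \<omega>" "\<And>k. 0 \<le> p \<omega> k" "(\<Sum>k=1..n+1. p \<omega> k) = 1" "p \<omega> (n+1) = 1 / L \<omega>" for \<omega>
    using pH_props[OF assms(2), where h=h and n=n and x="\<lambda>j. X j \<omega>"] unfolding L_def p_def by auto
  have a1: "\<alpha> \<le> 1" using assms by simp
  have Fe: "Fhat N h n (\<lambda>j. X j \<omega>) (\<lambda>j. V (X j \<omega>, Y j \<omega>)) = (\<lambda>t. (\<Sum>k=1..n. if ereal (v k \<omega>) \<le> t then p \<omega> k else 0)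
      + (if t = \<infinity> then p \<omega> (n+1) else 0))" for \<omega>
    unfolding Fhat_eq v_def p_def by simp
  note QL = Q_lemmas[OF _ _ a1 assms(6)]
  have QA: "Q \<omega> = \<infinity> \<longleftrightarrow> L \<omega> < 1 / (1 - \<alpha>)" for \<omega>
  proof -
    have "Q \<omega> = \<infinity> \<longleftrightarrow> (\<Sum>k=1..n. p \<omega> k) < \<alpha>"
      unfolding Q_def Fe by (rule QL(1)) (use props in auto)
    also have "(\<Sum>k=1..n. p \<omega> k) = 1 - 1 / L \<omega>" using props(3)[of \<omega>] props(4)[of \<omega>] by simp
    also have "1 - 1 / L \<omega> < \<alpha> \<longleftrightarrow> L \<omega> < 1 / (1 - \<alpha>)"
      using props(1)[of \<omega>] assms(7) by (simp add: field_simps)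
    finally show ?thesis .
  qed
  have QC: "ereal (v (n+1) \<omega>) \<le> Q \<omega> \<longleftrightarrow> (\<forall>j\<in>{1..n}. v j \<omega> < v (n+1) \<omega> \<longrightarrow> G j \<omega> < \<alpha>)" for \<omega>
    unfolding Q_def Fe G_def by (subst QL(2)) (use props in auto)
  have mXY: "(\<lambda>\<omega>. (X i \<omega>, Y i \<omega>)) \<in> borel_measurable M" if "i \<in> {1..n+1}" for i
    using assms(3) that unfolding P.indep_vars_def by auto
  have fstm: "fst \<in> borel_measurable (borel::((real^'p) \<times> real) measure)"
    by (intro borel_measurable_continuous_onI continuous_intros)
  have mX: "X i \<in> borel_measurable M" if "i \<in> {1..n+1}" for i
    using measurable_compose[OF mXY[OF that] fstm] by simp
  have mv: "v i \<in> borel_measurable M" if "i \<in> {1..n+1}" for i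
    using measurable_compose[OF mXY[OF that] assms(5)] unfolding v_def by simp
  have mN: "N \<in> borel_measurable borel" by (rule norm_cont[OF assms(2)])
  have mH: "(\<lambda>\<omega>. localizer N h (X (n+1) \<omega>) (X k \<omega>)) \<in> borel_measurable M" if "k \<in> {1..n+1}" for k
  proof -
    note [measurable] = mX[OF that] mX[of "n+1"] mN
    show ?thesis unfolding localizer_def by measurable
  qed
  have mL: "L \<in> borel_measurable M" unfolding L_def by (rule borel_measurable_sum) (rule mH)
  have mp: "(\<lambda>\<omega>. p \<omega> k) \<in> borel_measurable M" if "k \<in> {1..n+1}" for k
  proof -
    have "(\<lambda>\<omega>. p \<omega> k) = (\<lambda>\<omega>. localizer N h (X (n+1) \<omega>) (X k \<omega>) / L \<omega>)"
      unfolding p_def pH_def L_def by simp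
    then show ?thesis using mH[OF that] mL by simp
  qed
  have mG: "G j \<in> borel_measurable M" if "j \<in> {1..n+1}" for j
    unfolding G_def
  proof (rule borel_measurable_sum)
    fix k assume k: "k \<in> {1..n}"
    then have k1: "k \<in> {1..n+1}" by simp
    note [measurable] = mv[OF k1] mv[OF that] mp[OF k1]
    show "(\<lambda>\<omega>. if v k \<omega> \<le> v j \<omega> then p \<omega> k else 0) \<in> borel_measurable M" by measurable
  qed
  define C where "C = {\<omega> \<in> space M. ereal (v (n+1) \<omega>) \<le> Q \<omega>}"
  have Csets: "C \<in> sets M"
  proof -
    have "C = {\<omega> \<in> space M. \<forall>j\<in>{1..n}. v j \<omega> < v (n+1) \<omega> \<longrightarrow> G j \<omega> < \<alpha>}"
      unfolding C_def using QC by simp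
    also have "\<dots> \<in> sets M"
    proof (rule sets.sets_Collect_finite_All)
      fix j assume j: "j \<in> {1..n}"
      then have j1: "j \<in> {1..n+1}" by simp
      note [measurable] = mv[OF j1] mv[of "n+1"] mG[OF j1]
      show "{\<omega> \<in> space M. v j \<omega> < v (n+1) \<omega> \<longrightarrow> G j \<omega> < \<alpha>} \<in> sets M" by measurable
    qed simp
    finally show ?thesis .
  qed
  have AB: "{\<omega> \<in> space M. Q \<omega> = \<infinity>} = {\<omega> \<in> space M. L \<omega> < 1 / (1 - \<alpha>)}" using QA by simp
  have AC: "{\<omega> \<in> space M. Q \<omega> = \<infinity>} \<subseteq> C" unfolding C_def by auto
  have part1: "measure M {\<omega> \<in> space M. Q \<omega> = \<infinity>} \<ge> \<epsilon>" using AB assms(11) L_def by simp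
  have "measure M {\<omega> \<in> space M. Q \<omega> = \<infinity>} \<le> measure M C"
    by (rule P.finite_measure_mono[OF AC Csets])
  then have part3: "measure M C \<ge> \<epsilon>" using part1 by simp
  show ?thesis using part1 part3 unfolding C_def Q_def v_def by simp
qed

end
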